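(* Let $d=1$. There is a constant $c_1$ depending only on the dimension such that for all $N\ge1$, $n\ge1$ and integers $0=i_0<i_1<\cdots<i_n\le N$, $$\sum_{x_1,\dots,x_n\in\mathbb{Z}}\ \prod_{k=1}^n p_0^2(i_k-i_{k-1},x_k-x_{k-1})\left(\sum_{x\in\mathbb{Z}}x^2p_0(N-i_n,x-x_n)\right)^2\le c_1^nN^2\prod_{k=1}^n(i_k-i_{k-1})^{-1/2},$$ where $x_0=0$.
   Context: $p_0(n,x)$ is the probability that simple random walk on $\mathbb{Z}$ started at $0$ is at $x$ at time $n$. *)

theory Defs
  imports "HOL-Analysis.Analysis"
begin

fun srw_p :: "nat \<Rightarrow> int \<Rightarrow> real" where
  "srw_p 0 x = (if x = 0 then 1 else 0)"
| "srw_p (Suc n) x = (srw_p n (x - 1) + srw_p n (x + 1)) / 2"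

end

theory Submission
  imports Defs
begin


lemma p_nonneg: "0 \<le> srw_p n x"
  by (induction n arbitrary: x) auto

lemma p_out: "\<bar>x\<bar> > int n \<Longrightarrow> srw_p n x = 0"
  by (induction n arbitrary: x) auto

lemma p_summable: "(\<lambda>y. g y * srw_p n (y - a)) summable_on UNIV"
proof -
  have "(\<lambda>y. g y * srw_p n (y - a)) summable_on {a - int n .. a + int n}" by simp
  then show ?thesis
    by (rule summable_on_cong_neutral[THEN iffD1, rotated -1]) (auto intro!: p_out)
qed

lemma p_step: "infsum (\<lambda>y. g y * srw_p (Suc n) (y - a)) UNIV
   = (infsum (\<lambda>y. g y * srw_p n (y - (a+1))) UNIV + infsum (\<lambda>y. g y * srw_p n (y - (a-1))) UNIV) / 2"
proof -
  have "infsum (\<lambda>y. g y * srw_p (Suc n) (y - a)) UNIV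
     = infsum (\<lambda>y. (g y * srw_p n (y - (a+1)) + g y * srw_p n (y - (a-1))) / 2) UNIV"
    by (rule infsum_cong) (simp add: algebra_simps add_divide_distrib)
  also have "\<dots> = infsum (\<lambda>y. (g y * srw_p n (y - (a+1)) + g y * srw_p n (y - (a-1)))) UNIV / 2"
    by (simp only: divide_inverse infsum_cmult_left')
  also have "\<dots> = (infsum (\<lambda>y. g y * srw_p n (y - (a+1))) UNIV + infsum (\<lambda>y. g y * srw_p n (y - (a-1))) UNIV) / 2" by (subst infsum_add) (auto intro: p_summable)
  finally show ?thesis .
qed

lemma m0: "infsum (\<lambda>y. 1 * srw_p n (y - a)) UNIV = 1"
proof (induction n arbitrary: a)
  case 0
  have "infsum (\<lambda>y. 1 * srw_p 0 (y - a)) UNIV = infsum (\<lambda>y. 1 * srw_p 0 (y - a)) {a}"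
    by (rule infsum_cong_neutral) auto
  then show ?case by simp
next
  case (Suc n)
  show ?case unfolding p_step Suc by simp
qed

lemma m2: "infsum (\<lambda>y. (real_of_int y)^2 * srw_p n (y - a)) UNIV = (real_of_int a)^2 + real n"
proof (induction n arbitrary: a)
  case 0
  have "infsum (\<lambda>y. (real_of_int y)^2 * srw_p 0 (y - a)) UNIV = infsum (\<lambda>y. (real_of_int y)^2 * srw_p 0 (y - a)) {a}"
    by (rule infsum_cong_neutral) auto
  then show ?case by simp
next
  case (Suc n)
  show ?case unfolding p_step Suc by (simp add: algebra_simps power2_eq_square)
qed

lemma m4: "infsum (\<lambda>y. (real_of_int y)^4 * srw_p n (y - a)) UNIV = (real_of_int a)^4 + 6 * (real_of_int a)^2 * real n + 3 * (real n)^2 - 2 * real n"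
proof (induction n arbitrary: a)
  case 0
  have "infsum (\<lambda>y. (real_of_int y)^4 * srw_p 0 (y - a)) UNIV = infsum (\<lambda>y. (real_of_int y)^4 * srw_p 0 (y - a)) {a}"
    by (rule infsum_cong_neutral) auto
  then show ?case by simp
next
  case (Suc n)
  show ?case unfolding p_step Suc by (simp add: algebra_simps power2_eq_square power4_eq_xxxx)
qed




lemma p_parity: "odd (x + int n) \<Longrightarrow> srw_p n x = 0"
  by (induction n arbitrary: x) auto

lemma p_binom: "srw_p n (2 * int k - int n) = real (n choose k) / 2^n"
proof (induction n arbitrary: k)
  case 0
  then show ?case by (cases k) auto
next
  case (Suc n)
  show ?case
  proof (cases k)
    case 0
    have "srw_p (Suc n) (2 * int k - int (Suc n)) = (srw_p n (- int n - 2) + srw_p n (2 * int 0 - int n)) / 2"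
      using 0 by (simp add: algebra_simps)
    also have "srw_p n (- int n - 2) = 0" by (rule p_out) simp
    finally show ?thesis using 0 Suc.IH[of 0] by simp
  next
    case (Suc j)
    have "srw_p (Suc n) (2 * int k - int (Suc n)) = (srw_p n (2 * int j - int n) + srw_p n (2 * int (Suc j) - int n)) / 2"
      using Suc by (simp add: algebra_simps)
    also have "\<dots> = (real (n choose j) + real (n choose Suc j)) / 2 ^ Suc n"
      using Suc.IH[of j] Suc.IH[of "Suc j"] by (simp add: add_divide_distrib)
    also have "real (n choose j) + real (n choose Suc j) = real (Suc n choose k)"
      using Suc by simp
    finally show ?thesis .
  qed
qed

lemma p_le_central: "srw_p (2*m) x \<le> real ((2*m) choose m) / 4^m"
proof -
  consider "\<bar>x\<bar> > int (2*m)" | "odd (x + int (2*m))" | "\<bar>x\<bar> \<le> int (2*m)" "even (x + int (2*m))" by linarith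
  then show ?thesis
  proof cases
    case 1 then show ?thesis by (simp add: p_out)
  next
    case 2 then show ?thesis by (simp add: p_parity)
  next
    case 3
    then have "even x" by simp
    then obtain j0 where "x = 2 * j0" by (auto elim: evenE)
    then have j: "x + int (2*m) = 2 * (j0 + int m)" by simp
    define j where "j = j0 + int m"
    from j have j: "x + int (2*m) = 2 * j" unfolding j_def .
    with 3 have "j \<ge> 0" by linarith
    then obtain k where "j = int k" using nonneg_int_cases by blast
    with j have x: "x = 2 * int k - int (2*m)" by linarith
    have "srw_p (2*m) x = real ((2*m) choose k) / 2^(2*m)" unfolding x by (rule p_binom)
    also have "\<dots> \<le> real ((2*m) choose m) / 2^(2*m)"
      by (intro divide_right_mono) (simp_all add: binomial_maximum')
    also have "(2::real)^(2*m) = 4^m" by (simp add: power_mult)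
    finally show ?thesis .
  qed
qed



lemma central_rec: "((2*Suc m) choose (Suc m)) * (Suc m) = 2 * (2*m+1) * ((2*m) choose m)"
proof -
  have a: "Suc (Suc (2*m)) * (Suc (2*m) choose m) = (Suc (Suc (2*m)) choose Suc m) * Suc m"
    by (rule Suc_times_binomial_eq)
  have b: "Suc (2*m) * ((2*m) choose m) = (Suc (2*m) choose Suc m) * Suc m"
    by (rule Suc_times_binomial_eq)
  have c: "(Suc (2*m) choose Suc m) = (Suc (2*m) choose m)"
    using binomial_symmetric[of m "Suc (2*m)"] by simp
  define X where "X = (Suc (Suc (2*m)) choose Suc m)"
  define Y where "Y = (2*m) choose m"
  define Z where "Z = (Suc (2*m) choose m)"
  have a': "Suc (Suc (2*m)) * Z = X * Suc m" using a unfolding X_def Z_def .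
  have b': "Suc (2*m) * Y = Z * Suc m" using b c unfolding Y_def Z_def by simp
  have "X * Suc m * Suc m = Suc (Suc (2*m)) * (Z * Suc m)" using a' by (metis mult.assoc)
  also have "\<dots> = Suc (Suc (2*m)) * (Suc (2*m) * Y)" using b' by simp
  also have "\<dots> = Suc m * (2 * (2*m+1) * Y)" by simp
  finally have "Suc m * (X * Suc m) = Suc m * (2 * (2*m+1) * Y)" by (simp only: mult.commute)
  then have "X * Suc m = 2 * (2*m+1) * Y" by (simp only: mult_left_cancel nat.distinct(1) not_False_eq_True)
  moreover have "2*Suc m = Suc (Suc (2*m))" by simp
  ultimately show ?thesis unfolding X_def Y_def by simp
qed



lemma t1: fixes Y::real shows "(2 * (2 * real m + 1) * Y / (real m + 1)) / 4^(Suc m) = (Y / 4^m) * (2 * real m + 1) / (2 * (real m + 1))"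
proof -
  have p: "(4::real)^m > 0" "real m + 1 > 0" by auto
  have "(2 * (2 * real m + 1) * Y / (real m + 1)) / 4^(Suc m) = (2 * (2 * real m + 1) * Y) / ((real m + 1) * (4 * 4^m))"
    by (simp only: power_Suc divide_divide_eq_left)
  also have "\<dots> = ((2 * real m + 1) * Y) / (2 * (real m + 1) * 4^m)"
    using p by (simp add: frac_eq_eq del: of_nat_Suc; simp add: algebra_simps)
  also have "\<dots> = (Y / 4^m) * (2 * real m + 1) / (2 * (real m + 1))"
    using p by (simp add: frac_eq_eq del: of_nat_Suc; simp add: algebra_simps)
  finally show ?thesis .
qed

lemma central_sq: "(real ((2*m) choose m) / 4^m)^2 * (2*m+1) \<le> 1"
proof (induction m)
  case 0 then show ?case by simp
next
  case (Suc m)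
  define a where "a = real ((2*m) choose m) / 4^m"
  have r: "real ((2*Suc m) choose (Suc m)) * (real m + 1) = 2 * (2*real m+1) * real ((2*m) choose m)"
  proof -
    have "real (((2*Suc m) choose (Suc m)) * (Suc m)) = real (2 * (2*m+1) * ((2*m) choose m))"
      by (simp only: central_rec)
    then show ?thesis by (simp only: of_nat_mult of_nat_Suc of_nat_add of_nat_numeral of_nat_1) (simp only: add.commute)
  qed
  define X where "X = real ((2*Suc m) choose (Suc m))"
  define Y where "Y = real ((2*m) choose m)"
  have r': "X * (real m + 1) = 2 * (2 * real m + 1) * Y" using r unfolding X_def Y_def by simp
  have e': "X = 2 * (2 * real m + 1) * Y / (real m + 1)" using r' by (simp add: field_simps)
  have e: "real ((2*Suc m) choose (Suc m)) / 4^(Suc m) = a * (2 * real m + 1) / (2 * (real m + 1))"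
    unfolding a_def X_def[symmetric] Y_def[symmetric] e' by (rule t1)
  have ih: "a^2 * (2 * real m + 1) \<le> 1" using Suc.IH unfolding a_def by (simp add: add.commute)
  have "(a * (2 * real m + 1) / (2 * (real m + 1)))^2 * (2 * real (Suc m) + 1)
      = (a^2 * (2 * real m + 1)) * ((2 * real m + 1) * (2 * real m + 3) / (4 * (real m + 1)^2))"
    by (simp add: field_simps power2_eq_square)
  also have "\<dots> \<le> 1 * 1"
  proof (rule mult_mono)
    show "(2 * real m + 1) * (2 * real m + 3) / (4 * (real m + 1)^2) \<le> 1"
      by (subst pos_divide_le_eq) (auto simp: power2_eq_square algebra_simps add_pos_nonneg)
  qed (use ih in auto)
  finally show ?case using e by simp
qed



lemma p_bound:
  assumes "t \<ge> 1"
  shows "srw_p t x \<le> real t powr (-1/2)"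
proof -
  define m where "m = t div 2"
  have m: "t = 2*m \<or> t = 2*m+1" unfolding m_def by presburger
  define a where "a = real ((2*m) choose m) / 4^m"
  have pa: "srw_p t x \<le> a"
  proof (cases "t = 2*m")
    case True then show ?thesis unfolding a_def using p_le_central by simp
  next
    case False
    then have "t = Suc (2*m)" using m by simp
    then have "srw_p t x = (srw_p (2*m) (x-1) + srw_p (2*m) (x+1)) / 2" by (simp only: srw_p.simps(2))
    also have "\<dots> \<le> (a + a) / 2" unfolding a_def by (intro divide_right_mono add_mono p_le_central) auto
    finally show ?thesis by simp
  qed
  have "a^2 * (2*m+1) \<le> 1" unfolding a_def using central_sq[of m] by simp
  moreover have "a^2 * real t \<le> a^2 * (2*m+1)" using m by (intro mult_left_mono) auto
  ultimately have "a^2 * real t \<le> 1" by linarith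
  then have "a^2 \<le> 1 / real t" using assms by (simp add: field_simps)
  then have "a \<le> sqrt (1 / real t)" by (rule real_le_rsqrt)
  also have "sqrt (1 / real t) = real t powr (-1/2)"
  proof -
    have h: "(-1/2::real) = - (1/2)" by simp
    have "real t powr (-1/2) = 1 / real t powr (1/2)" unfolding h by (rule powr_minus_divide)
    also have "real t powr (1/2) = sqrt (real t)" by (rule powr_half_sqrt) simp
    finally show ?thesis by (simp add: real_sqrt_divide)
  qed
  finally show ?thesis using pa by simp
qed




definition SS :: "nat \<Rightarrow> int \<Rightarrow> (nat \<Rightarrow> int) set" where
  "SS n R = {x. \<forall>k. (k \<in> {1..n} \<longrightarrow> x k \<in> {-R..R}) \<and> (k \<notin> {1..n} \<longrightarrow> x k = 0)}"

lemma SS_finite: "finite (SS n R)"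
  unfolding SS_def by (rule finite_set_of_finite_funs) auto

lemma SS_0: "SS 0 R = {(\<lambda>_. 0)}"
proof
  show "SS 0 R \<subseteq> {(\<lambda>_. 0)}"
  proof
    fix x assume "x \<in> SS 0 R"
    then have "\<forall>k. x k = 0" by (simp add: SS_def)
    then have "x = (\<lambda>_. 0)" by (simp add: fun_eq_iff)
    then show "x \<in> {(\<lambda>_. 0)}" by simp
  qed
  show "{(\<lambda>_. 0)} \<subseteq> SS 0 R" by (simp add: SS_def)
qed

lemma SS_Suc_sum: "sum g (SS (Suc n) R) = (\<Sum>x\<in>SS n R. \<Sum>y\<in>{-R..R}. g (x(Suc n := y)))"
proof -
  let ?h = "\<lambda>(x, y). x(Suc n := y)"
  have inj: "inj_on ?h (SS n R \<times> {-R..R})"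
  proof (rule inj_onI, clarify)
    fix x y x' y'
    assume x: "x \<in> SS n R" and x': "x' \<in> SS n R" and e: "x(Suc n := y) = x'(Suc n := y')"
    have "y = y'" using fun_cong[OF e, of "Suc n"] by simp
    moreover have "x = x'"
    proof
      fix k show "x k = x' k"
      proof (cases "k = Suc n")
        case True then show ?thesis using x x' unfolding SS_def by auto
      next
        case False then show ?thesis using fun_cong[OF e, of k] by simp
      qed
    qed
    ultimately show "x = x' \<and> y = y'" by simp
  qed
  have img: "?h ` (SS n R \<times> {-R..R}) = SS (Suc n) R"
  proof
    show "?h ` (SS n R \<times> {-R..R}) \<subseteq> SS (Suc n) R"
    proof (rule image_subsetI, clarify)
      fix x y assume x: "x \<in> SS n R" and y: "y \<in> {-R..R}"
      show "x(Suc n := y) \<in> SS (Suc n) R"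
        unfolding SS_def
      proof (intro CollectI allI conjI impI)
        fix k assume k: "k \<in> {1..Suc n}"
        show "(x(Suc n := y)) k \<in> {-R..R}"
        proof (cases "k = Suc n")
          case True then show ?thesis using y by simp
        next
          case False then have "k \<in> {1..n}" using k by auto
          then show ?thesis using x False unfolding SS_def by auto
        qed
      next
        fix k assume k: "k \<notin> {1..Suc n}"
        then have "k \<noteq> Suc n" "k \<notin> {1..n}" by auto
        then show "(x(Suc n := y)) k = 0" using x unfolding SS_def by auto
      qed
    qed
  next
    show "SS (Suc n) R \<subseteq> ?h ` (SS n R \<times> {-R..R})"
    proof
      fix z assume z: "z \<in> SS (Suc n) R"
      have "z = ?h (z(Suc n := 0), z (Suc n))" by simp
      moreover have "z(Suc n := 0) \<in> SS n R"
        unfolding SS_def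
      proof (intro CollectI allI conjI impI)
        fix k assume k: "k \<in> {1..n}"
        then have "k \<noteq> Suc n" "k \<in> {1..Suc n}" by auto
        then show "(z(Suc n := 0)) k \<in> {-R..R}" using z unfolding SS_def by auto
      next
        fix k assume k: "k \<notin> {1..n}"
        show "(z(Suc n := 0)) k = 0"
        proof (cases "k = Suc n")
          case False then have "k \<notin> {1..Suc n}" using k by auto
          then show ?thesis using z False unfolding SS_def by auto
        qed simp
      qed
      moreover have "z (Suc n) \<in> {-R..R}" using z unfolding SS_def by auto
      ultimately show "z \<in> ?h ` (SS n R \<times> {-R..R})" by blast
    qed
  qed
  have "(\<Sum>x\<in>SS n R. \<Sum>y\<in>{-R..R}. g (x(Suc n := y))) = (\<Sum>p\<in>SS n R \<times> {-R..R}. g (?h p))"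
    by (subst sum.cartesian_product) (simp add: case_prod_beta)
  also have "\<dots> = sum g (?h ` (SS n R \<times> {-R..R}))"
    using sum.reindex[OF inj, of g] by (simp add: comp_def)
  finally show ?thesis using img by simp
qed



lemma full_moment:
  assumes "s \<ge> 0"
  shows "infsum (\<lambda>y. ((real_of_int y)^2 + 3 * s)^2 * srw_p t (y - a)) UNIV
     \<le> ((real_of_int a)^2 + 3 * (s + real t))^2"
proof -
  have "infsum (\<lambda>y. ((real_of_int y)^2 + 3 * s)^2 * srw_p t (y - a)) UNIV
    = infsum (\<lambda>y. (real_of_int y)^4 * srw_p t (y - a) + ((6 * s) * ((real_of_int y)^2 * srw_p t (y - a))
        + (9 * s^2) * (1 * srw_p t (y - a)))) UNIV"
    by (rule infsum_cong) (simp add: algebra_simps power2_eq_square power4_eq_xxxx)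
  also have "\<dots> = infsum (\<lambda>y. (real_of_int y)^4 * srw_p t (y - a)) UNIV
      + ((6 * s) * infsum (\<lambda>y. (real_of_int y)^2 * srw_p t (y - a)) UNIV
      + (9 * s^2) * infsum (\<lambda>y. 1 * srw_p t (y - a)) UNIV)"
  proof -
    have s4: "(\<lambda>y. (real_of_int y)^4 * srw_p t (y - a)) summable_on UNIV" by (rule p_summable)
    have s2: "(\<lambda>y. (6 * s) * ((real_of_int y)^2 * srw_p t (y - a))) summable_on UNIV"
      by (rule summable_on_cmult_right) (rule p_summable)
    have s0: "(\<lambda>y. (9 * s^2) * (1 * srw_p t (y - a))) summable_on UNIV"
      by (rule summable_on_cmult_right) (rule p_summable)
    show ?thesis
      by (simp only: infsum_add[OF s4 summable_on_add[OF s2 s0]] infsum_add[OF s2 s0] infsum_cmult_right')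
  qed
  also have "\<dots> = (real_of_int a)^4 + 6 * (real_of_int a)^2 * real t + 3 * (real t)^2 - 2 * real t
      + ((6 * s) * ((real_of_int a)^2 + real t) + 9 * s^2)"
    by (simp only: m0 m2 m4 mult_1_right)
  also have "\<dots> \<le> ((real_of_int a)^2 + 3 * (s + real t))^2"
    using assms by (simp add: algebra_simps power2_eq_square power4_eq_xxxx)
  finally show ?thesis .
qed

lemma inner:
  assumes "t \<ge> 1" "s \<ge> 0" "finite A"
  shows "(\<Sum>y\<in>A. (srw_p t (y - a))^2 * ((real_of_int y)^2 + 3 * s)^2)
     \<le> real t powr (-1/2) * ((real_of_int a)^2 + 3 * (s + real t))^2"
proof -
  let ?q = "real t powr (-1/2)"
  have "(\<Sum>y\<in>A. (srw_p t (y - a))^2 * ((real_of_int y)^2 + 3 * s)^2)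
      \<le> (\<Sum>y\<in>A. ?q * (((real_of_int y)^2 + 3 * s)^2 * srw_p t (y - a)))"
  proof (rule sum_mono)
    fix y
    have "(srw_p t (y - a))^2 \<le> ?q * srw_p t (y - a)"
      using p_bound[OF assms(1), of "y - a"] p_nonneg[of t "y - a"]
      by (simp add: power2_eq_square mult_right_mono)
    show "(srw_p t (y - a))^2 * ((real_of_int y)^2 + 3 * s)^2 \<le> ?q * (((real_of_int y)^2 + 3 * s)^2 * srw_p t (y - a))"
    proof -
      have "(srw_p t (y - a))^2 * ((real_of_int y)^2 + 3 * s)^2 \<le> (?q * srw_p t (y - a)) * ((real_of_int y)^2 + 3 * s)^2"
        by (rule mult_right_mono) (use \<open>(srw_p t (y - a))^2 \<le> ?q * srw_p t (y - a)\<close> in auto)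
      then show ?thesis by (simp only: mult_ac)
    qed
  qed
  also have "\<dots> = ?q * (\<Sum>y\<in>A. ((real_of_int y)^2 + 3 * s)^2 * srw_p t (y - a))"
    by (simp add: sum_distrib_left)
  also have "(\<Sum>y\<in>A. ((real_of_int y)^2 + 3 * s)^2 * srw_p t (y - a))
      \<le> infsum (\<lambda>y. ((real_of_int y)^2 + 3 * s)^2 * srw_p t (y - a)) UNIV"
  proof -
    have "infsum (\<lambda>y. ((real_of_int y)^2 + 3 * s)^2 * srw_p t (y - a)) A
        \<le> infsum (\<lambda>y. ((real_of_int y)^2 + 3 * s)^2 * srw_p t (y - a)) UNIV"
      by (rule infsum_mono_neutral) (auto simp: assms(3) p_summable p_nonneg)
    then show ?thesis using assms(3) by simp
  qed
  also have "\<dots> \<le> ((real_of_int a)^2 + 3 * (s + real t))^2"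
    by (rule full_moment[OF assms(2)])
  finally show ?thesis by (simp add: mult_left_mono)
qed




lemma main:
  fixes i :: "nat \<Rightarrow> nat"
  assumes "i 0 = 0" "\<forall>k<n. i k < i (Suc k)" "s \<ge> 0"
  shows "(\<Sum>x\<in>SS n R. (\<Prod>k\<in>{1..n}. (srw_p (i k - i (k-1)) (x k - x (k-1)))^2) * ((real_of_int (x n))^2 + 3 * s)^2)
   \<le> (\<Prod>k\<in>{1..n}. real (i k - i (k-1)) powr (-1/2)) * (3 * (s + real (i n)))^2"
  using assms(2,3)
proof (induction n arbitrary: s)
  case 0
  then show ?case using assms(1) by (simp add: SS_0 power2_eq_square)
next
  case (Suc n)
  define t where "t = i (Suc n) - i n"
  have ilt: "i n < i (Suc n)" using Suc.prems by simp
  then have t1: "t \<ge> 1" unfolding t_def by simp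
  have tsum: "real t + real (i n) = real (i (Suc n))" unfolding t_def using ilt by simp
  define P where "P x = (\<Prod>k\<in>{1..n}. (srw_p (i k - i (k-1)) (x k - x (k-1)))^2)" for x :: "nat \<Rightarrow> int"
  define Q where "Q = (\<Prod>k\<in>{1..n}. real (i k - i (k-1)) powr (-1/2))"
  have P_upd: "(\<Prod>k\<in>{1..Suc n}. (srw_p (i k - i (k-1)) ((x(Suc n := y)) k - (x(Suc n := y)) (k-1)))^2)
      = P x * (srw_p t (y - x n))^2" for x y
  proof -
    have "(\<Prod>k\<in>{1..n}. (srw_p (i k - i (k-1)) ((x(Suc n := y)) k - (x(Suc n := y)) (k-1)))^2) = P x"
      unfolding P_def by (rule prod.cong) auto
    then show ?thesis by (simp add: t_def)
  qed
  have Pnn: "P x \<ge> 0" for x unfolding P_def by (intro prod_nonneg) auto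
  have "(\<Sum>x\<in>SS (Suc n) R. (\<Prod>k\<in>{1..Suc n}. (srw_p (i k - i (k-1)) (x k - x (k-1)))^2) * ((real_of_int (x (Suc n)))^2 + 3 * s)^2)
     = (\<Sum>x\<in>SS n R. \<Sum>y\<in>{-R..R}. P x * ((srw_p t (y - x n))^2 * ((real_of_int y)^2 + 3 * s)^2))"
    by (subst SS_Suc_sum) (simp only: P_upd fun_upd_same mult.assoc)
  also have "\<dots> = (\<Sum>x\<in>SS n R. P x * (\<Sum>y\<in>{-R..R}. (srw_p t (y - x n))^2 * ((real_of_int y)^2 + 3 * s)^2))"
    by (simp add: sum_distrib_left)
  also have "\<dots> \<le> (\<Sum>x\<in>SS n R. P x * (real t powr (-1/2) * ((real_of_int (x n))^2 + 3 * (s + real t))^2))"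
    by (intro sum_mono mult_left_mono inner t1 Pnn) (use Suc.prems in auto)
  also have "\<dots> = real t powr (-1/2) * (\<Sum>x\<in>SS n R. P x * ((real_of_int (x n))^2 + 3 * (s + real t))^2)"
    by (simp add: sum_distrib_left mult_ac)
  also have "\<dots> \<le> real t powr (-1/2) * (Q * (3 * ((s + real t) + real (i n)))^2)"
    unfolding P_def Q_def
    by (intro mult_left_mono Suc.IH) (use Suc.prems in auto)
  also have "\<dots> = (\<Prod>k\<in>{1..Suc n}. real (i k - i (k-1)) powr (-1/2)) * (3 * (s + real (i (Suc n))))^2"
    unfolding Q_def using tsum by (simp add: t_def mult_ac add.assoc)
  finally show ?case .
qed


theorem lemma10:
  "\<exists>c1::real. \<forall>(N::nat) (n::nat) (i::nat \<Rightarrow> nat).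
     N \<ge> 1 \<longrightarrow> n \<ge> 1 \<longrightarrow> i 0 = 0 \<longrightarrow> (\<forall>k<n. i k < i (Suc k)) \<longrightarrow> i n \<le> N \<longrightarrow>
     (\<Sum>\<^sub>\<infinity>x\<in>{x::nat \<Rightarrow> int. \<forall>k. k \<notin> {1..n} \<longrightarrow> x k = 0}.
        (\<Prod>k\<in>{1..n}. (srw_p (i k - i (k - 1)) (x k - x (k - 1)))^2) *
        (\<Sum>\<^sub>\<infinity>y\<in>(UNIV::int set). (real_of_int y)^2 * srw_p (N - i n) (y - x n))^2)
     \<le> c1 ^ n * (real N)^2 * (\<Prod>k\<in>{1..n}. real (i k - i (k - 1)) powr (-1/2))"
proof (rule exI[of _ 9], intro allI impI)
  fix N n :: nat and i :: "nat \<Rightarrow> nat"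
  assume N: "N \<ge> 1" and n: "n \<ge> 1" and i0: "i 0 = 0" and inc: "\<forall>k<n. i k < i (Suc k)" and iN: "i n \<le> N"
  define D where "D = {x::nat \<Rightarrow> int. \<forall>k. k \<notin> {1..n} \<longrightarrow> x k = 0}"
  define P where "P x = (\<Prod>k\<in>{1..n}. (srw_p (i k - i (k - 1)) (x k - x (k - 1)))^2)" for x :: "nat \<Rightarrow> int"
  define m where "m = real (N - i n)"
  define Q where "Q = (\<Prod>k\<in>{1..n}. real (i k - i (k - 1)) powr (-1/2))"
  define f where "f x = P x * (\<Sum>\<^sub>\<infinity>y\<in>(UNIV::int set). (real_of_int y)^2 * srw_p (N - i n) (y - x n))^2" for x
  define g where "g x = P x * ((real_of_int (x n))^2 + 3 * m)^2" for x
  have Pnn: "P x \<ge> 0" for x unfolding P_def by (intro prod_nonneg) auto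
  have Qnn: "Q \<ge> 0" unfolding Q_def by (intro prod_nonneg) auto
  have m0: "m \<ge> 0" unfolding m_def by simp
  have mN: "m + real (i n) = real N" unfolding m_def using iN by simp
  have f_eq: "f x = P x * ((real_of_int (x n))^2 + m)^2" for x
    unfolding f_def m2 m_def ..
  have fnn: "f x \<ge> 0" for x unfolding f_eq using Pnn by simp
  have fg: "f x \<le> g x" for x
    unfolding f_eq g_def
    by (intro mult_left_mono Pnn power_mono) (use m0 in auto)
  have B: "Q * (3 * real N)^2 \<le> 9 ^ n * (real N)^2 * Q"
  proof -
    have "(9::real) \<le> 9 ^ n" using n by (metis One_nat_def power_increasing power_one_right one_le_numeral)
    then have "9 * ((real N)^2 * Q) \<le> 9 ^ n * ((real N)^2 * Q)"
      by (intro mult_right_mono) (use Qnn in auto)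
    then show ?thesis by (simp add: power2_eq_square mult_ac)
  qed
  have SSb: "sum g (SS n R) \<le> 9 ^ n * (real N)^2 * Q" for R
  proof -
    have "sum g (SS n R) \<le> Q * (3 * (m + real (i n)))^2"
      unfolding g_def P_def Q_def by (rule main[OF i0 inc m0])
    then show ?thesis using B mN by simp
  qed
  have "infsum f D \<le> 9 ^ n * (real N)^2 * Q"
  proof (cases "f summable_on D")
    case True
    show ?thesis
    proof (rule infsum_le_finite_sums[OF True])
      fix F assume F: "finite F" "F \<subseteq> D"
      define R where "R = Max (insert 0 ((\<lambda>(x, k). \<bar>x k\<bar>) ` (F \<times> {1..n})))"
      have fin: "finite (insert 0 ((\<lambda>(x, k). \<bar>x k\<bar>) ` (F \<times> {1..n})))" using F by simp
      have FS: "F \<subseteq> SS n R"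
      proof
        fix x assume x: "x \<in> F"
        show "x \<in> SS n R" unfolding SS_def
        proof (intro CollectI allI conjI impI)
          fix k assume k: "k \<in> {1..n}"
          have "\<bar>x k\<bar> \<in> insert 0 ((\<lambda>(x, k). \<bar>x k\<bar>) ` (F \<times> {1..n}))"
            using x k by force
          then have "\<bar>x k\<bar> \<le> R" unfolding R_def using fin by (rule Max_ge[rotated])
          then show "x k \<in> {-R..R}" by auto
        next
          fix k assume "k \<notin> {1..n}"
          then show "x k = 0" using x F(2) unfolding D_def by auto
        qed
      qed
      have "sum f F \<le> sum f (SS n R)"
        by (rule sum_mono2[OF SS_finite FS]) (use fnn in auto)
      also have "\<dots> \<le> sum g (SS n R)" by (rule sum_mono) (rule fg)
      also have "\<dots> \<le> 9 ^ n * (real N)^2 * Q" by (rule SSb)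
      finally show "sum f F \<le> 9 ^ n * (real N)^2 * Q" .
    qed
  next
    case False
    then have "infsum f D = 0" by (rule infsum_not_exists)
    then show ?thesis using Qnn by simp
  qed
  then show "(\<Sum>\<^sub>\<infinity>x\<in>{x::nat \<Rightarrow> int. \<forall>k. k \<notin> {1..n} \<longrightarrow> x k = 0}.
        (\<Prod>k\<in>{1..n}. (srw_p (i k - i (k - 1)) (x k - x (k - 1)))^2) *
        (\<Sum>\<^sub>\<infinity>y\<in>(UNIV::int set). (real_of_int y)^2 * srw_p (N - i n) (y - x n))^2)
     \<le> 9 ^ n * (real N)^2 * (\<Prod>k\<in>{1..n}. real (i k - i (k - 1)) powr (-1/2))"
    unfolding D_def f_def P_def Q_def .
qed


end
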